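(* Let $\mathcal{H}^c_{A_{n-1}}$ be the degenerate affine Hecke–Clifford algebra of type $A_{n-1}$. Let $\gamma=(\gamma_1,\dots,\gamma_k)$ be a composition of $n$, let $B_j=\{\gamma_1+\dots+\gamma_{j-1}+1,\dots,\gamma_1+\dots+\gamma_j\}$, and let $w_\gamma\in S_n$ be the product over $j$ of the cycles $(a\ \ a+1\ \cdots\ b)$ where $B_j=\{a,\dots,b\}$. Let $I\subseteq\{1,\dots,n\}$ with $|I|$ even, and $I_j=I\cap B_j$. If every $|I_j|$ is even, then $w_\gamma c_I-\epsilon w_\gamma\in[\mathcal{H}^c_{A_{n-1}},\mathcal{H}^c_{A_{n-1}}]$ for some $\epsilon\in\{1,-1\}$; otherwise $w_\gamma c_I\in[\mathcal{H}^c_{A_{n-1}},\mathcal{H}^c_{A_{n-1}}]$.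
   Context: $\mathcal{H}^c_{A_{n-1}}$ (parameter $u\in\mathbb{C}$) is the $\mathbb{C}$-algebra generated by commuting $x_1,\dots,x_n$, Clifford generators $c_1,\dots,c_n$ ($c_i^2=1$, $c_ic_j=-c_jc_i$ for $i\ne j$) and $S_n$ (simple reflections $s_i=(i,i+1)$), with $\mathbb{C}[x]$, the Clifford algebra and $\mathbb{C}S_n$ subalgebras and relations $x_ic_i=-c_ix_i$, $x_ic_j=c_jx_i$ ($i\ne j$), $\sigma c_i=c_{\sigma(i)}\sigma$ ($\sigma\in S_n$), $x_{i+1}s_i-s_ix_i=u(1-c_{i+1}c_i)$, $x_js_i=s_ix_j$ ($j\ne i,i+1$). A composition of $n$ is a sequence of positive integers summing to $n$. For $I=\{i_1<\dots<i_m\}$, $c_I=c_{i_1}\cdots c_{i_m}$. $[H,H]$ is the linear span of all $hh'-h'h$. *)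

theory Defs
  imports Complex_Main
begin

text \<open>Generators of the free algebra: X i = x_i, C i = c_i, S i = s_i = (i,i+1) (1-based).\<close>
datatype gen = X nat | C nat | S nat

text \<open>Free associative unital C-algebra on gen: finitely supported functions on words.\<close>
type_synonym fa = "gen list \<Rightarrow> complex"

definition fin_supp :: "fa \<Rightarrow> bool" where
  "fin_supp f \<longleftrightarrow> finite {w. f w \<noteq> 0}"

definition fa_zero :: fa where "fa_zero = (\<lambda>_. 0)"
definition fa_add :: "fa \<Rightarrow> fa \<Rightarrow> fa" where "fa_add f g = (\<lambda>w. f w + g w)"
definition fa_sub :: "fa \<Rightarrow> fa \<Rightarrow> fa" where "fa_sub f g = (\<lambda>w. f w - g w)"
definition fa_smult :: "complex \<Rightarrow> fa \<Rightarrow> fa" where "fa_smult a f = (\<lambda>w. a * f w)"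
definition fa_mul :: "fa \<Rightarrow> fa \<Rightarrow> fa" where
  "fa_mul f g = (\<lambda>w. \<Sum>i\<le>length w. f (take i w) * g (drop i w))"
definition mon :: "gen list \<Rightarrow> fa" where
  "mon w = (\<lambda>v. if v = w then 1 else 0)"

inductive_set ideal_of :: "fa set \<Rightarrow> fa set" for R where
  zero: "fa_zero \<in> ideal_of R"
| gen: "r \<in> R \<Longrightarrow> fa_mul (mon a) (fa_mul r (mon b)) \<in> ideal_of R"
| add: "f \<in> ideal_of R \<Longrightarrow> g \<in> ideal_of R \<Longrightarrow> fa_add f g \<in> ideal_of R"
| smult: "f \<in> ideal_of R \<Longrightarrow> fa_smult a f \<in> ideal_of R"

inductive_set comm_span :: "fa set" where
  zero: "fa_zero \<in> comm_span"
| comm: "fin_supp f \<Longrightarrow> fin_supp g \<Longrightarrow> fa_sub (fa_mul f g) (fa_mul g f) \<in> comm_span"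
| add: "f \<in> comm_span \<Longrightarrow> g \<in> comm_span \<Longrightarrow> fa_add f g \<in> comm_span"
| smult: "f \<in> comm_span \<Longrightarrow> fa_smult a f \<in> comm_span"

definition tr :: "nat \<Rightarrow> nat \<Rightarrow> nat" where
  "tr i j = (if j = i then i + 1 else if j = i + 1 then i else j)"

text \<open>Defining relations (as elements lhs - rhs) of the degenerate affine Hecke-Clifford
  algebra of type A_{n-1} with parameter u. Generators with out-of-range index are killed,
  so the quotient is generated by x_1..x_n, c_1..c_n, s_1..s_{n-1}.\<close>
definition hc_rels :: "nat \<Rightarrow> complex \<Rightarrow> fa set" where
  "hc_rels n u =
     {mon [X i] | i. i < 1 \<or> n < i} \<union>
     {mon [C i] | i. i < 1 \<or> n < i} \<union>
     {mon [S i] | i. i < 1 \<or> n \<le> i} \<union>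
     {fa_sub (mon [X i, X j]) (mon [X j, X i]) | i j. i \<in> {1..n} \<and> j \<in> {1..n}} \<union>
     {fa_sub (mon [C i, C i]) (mon []) | i. i \<in> {1..n}} \<union>
     {fa_add (mon [C i, C j]) (mon [C j, C i]) | i j. i \<in> {1..n} \<and> j \<in> {1..n} \<and> i \<noteq> j} \<union>
     {fa_sub (mon [S i, S i]) (mon []) | i. i \<in> {1..<n}} \<union>
     {fa_sub (mon [S i, S (i+1), S i]) (mon [S (i+1), S i, S (i+1)]) | i. i \<in> {1..<n} \<and> i + 1 \<in> {1..<n}} \<union>
     {fa_sub (mon [S i, S j]) (mon [S j, S i]) | i j. i \<in> {1..<n} \<and> j \<in> {1..<n} \<and> (i + 1 < j \<or> j + 1 < i)} \<union>
     {fa_add (mon [X i, C i]) (mon [C i, X i]) | i. i \<in> {1..n}} \<union>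
     {fa_sub (mon [X i, C j]) (mon [C j, X i]) | i j. i \<in> {1..n} \<and> j \<in> {1..n} \<and> i \<noteq> j} \<union>
     {fa_sub (mon [S i, C j]) (mon [C (tr i j), S i]) | i j. i \<in> {1..<n} \<and> j \<in> {1..n}} \<union>
     {fa_sub (fa_sub (mon [X (i+1), S i]) (mon [S i, X i]))
             (fa_smult u (fa_sub (mon []) (mon [C (i+1), C i]))) | i. i \<in> {1..<n}} \<union>
     {fa_sub (mon [X j, S i]) (mon [S i, X j]) | i j. i \<in> {1..<n} \<and> j \<in> {1..n} \<and> j \<noteq> i \<and> j \<noteq> i + 1}"

text \<open>h lies in [H,H] for H = F / J (J the ideal of relations) iff a representative
  lies in [F,F] + J.\<close>
definition in_HH_comm :: "nat \<Rightarrow> complex \<Rightarrow> fa \<Rightarrow> bool" where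
  "in_HH_comm n u h \<longleftrightarrow> (\<exists>a b. a \<in> comm_span \<and> b \<in> ideal_of (hc_rels n u) \<and> h = fa_add a b)"

text \<open>Block B_j (0-based j) of a composition gamma.\<close>
definition block :: "nat list \<Rightarrow> nat \<Rightarrow> nat set" where
  "block \<gamma> j = {sum_list (take j \<gamma>) + 1 .. sum_list (take (Suc j) \<gamma>)}"

text \<open>Word for the cycle (a a+1 ... b) = s_a s_{a+1} ... s_{b-1}, and for w_gamma.\<close>
definition cycle_word :: "nat \<Rightarrow> nat \<Rightarrow> gen list" where
  "cycle_word a b = map S [a..<b]"

definition w_word :: "nat list \<Rightarrow> gen list" where
  "w_word \<gamma> = concat (map (\<lambda>j. cycle_word (sum_list (take j \<gamma>) + 1) (sum_list (take (Suc j) \<gamma>)))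
                            [0..<length \<gamma>])"

definition c_word :: "nat set \<Rightarrow> gen list" where
  "c_word I = map C (sorted_list_of_set I)"

end

theory Submission
  imports Defs "HOL-Library.Multiset"
begin


lemma mul_mon_left:
  "fa_mul (mon p) g w = (if take (length p) w = p then g (drop (length p) w) else 0)"
proof -
  have "fa_mul (mon p) g w = (\<Sum>i\<le>length w. if i = length p then (if take (length p) w = p then g (drop (length p) w) else 0) else 0)"
    unfolding fa_mul_def mon_def
    by (rule sum.cong) (auto simp: min_def split: if_splits)
  also have "\<dots> = (if take (length p) w = p then g (drop (length p) w) else 0)"
    by (auto simp: min_def dest: arg_cong[of _ _ length])
  finally show ?thesis .
qed

lemma mon_mul: "fa_mul (mon a) (mon b) = mon (a @ b)"
  by (rule ext) (simp add: mul_mon_left, auto simp: mon_def append_eq_conv_conj, metis append_take_drop_id)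

lemma mul_sub_left: "fa_mul (fa_sub f g) h = fa_sub (fa_mul f h) (fa_mul g h)"
  by (rule ext) (simp add: fa_mul_def fa_sub_def sum_subtractf left_diff_distrib)
lemma mul_sub_right: "fa_mul h (fa_sub f g) = fa_sub (fa_mul h f) (fa_mul h g)"
  by (rule ext) (simp add: fa_mul_def fa_sub_def sum_subtractf right_diff_distrib)
lemma mul_add_left: "fa_mul (fa_add f g) h = fa_add (fa_mul f h) (fa_mul g h)"
  by (rule ext) (simp add: fa_mul_def fa_add_def sum.distrib distrib_right)
lemma mul_add_right: "fa_mul h (fa_add f g) = fa_add (fa_mul h f) (fa_mul h g)"
  by (rule ext) (simp add: fa_mul_def fa_add_def sum.distrib distrib_left)

lemma fin_supp_mon: "fin_supp (mon w)"
  unfolding fin_supp_def mon_def by simp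

definition inM where "inM n u h \<longleftrightarrow> in_HH_comm n u h"

lemma inM_add: "inM n u a \<Longrightarrow> inM n u b \<Longrightarrow> inM n u (fa_add a b)"
  unfolding inM_def in_HH_comm_def
proof (elim exE conjE)
  fix a1 a2 b1 b2 assume h: "a1 \<in> comm_span" "a2 \<in> ideal_of (hc_rels n u)" "a = fa_add a1 a2"
    "b1 \<in> comm_span" "b2 \<in> ideal_of (hc_rels n u)" "b = fa_add b1 b2"
  have 1: "fa_add a1 b1 \<in> comm_span" using h by (intro comm_span.add)
  have 2: "fa_add a2 b2 \<in> ideal_of (hc_rels n u)" using h by (intro ideal_of.add)
  have 3: "fa_add a b = fa_add (fa_add a1 b1) (fa_add a2 b2)" using h by (auto simp: fa_add_def)
  show "\<exists>x y. x \<in> comm_span \<and> y \<in> ideal_of (hc_rels n u) \<and> fa_add a b = fa_add x y"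
    using 1 2 3 by blast
qed

lemma inM_smult: "inM n u a \<Longrightarrow> inM n u (fa_smult c a)"
  unfolding inM_def in_HH_comm_def
proof (elim exE conjE)
  fix a1 a2 assume h: "a1 \<in> comm_span" "a2 \<in> ideal_of (hc_rels n u)" "a = fa_add a1 a2"
  have 1: "fa_smult c a1 \<in> comm_span" using h by (intro comm_span.smult)
  have 2: "fa_smult c a2 \<in> ideal_of (hc_rels n u)" using h by (intro ideal_of.smult)
  have 3: "fa_smult c a = fa_add (fa_smult c a1) (fa_smult c a2)" using h by (auto simp: fa_add_def fa_smult_def distrib_left)
  show "\<exists>x y. x \<in> comm_span \<and> y \<in> ideal_of (hc_rels n u) \<and> fa_smult c a = fa_add x y"
    using 1 2 3 by blast
qed

lemma inM_ideal: "b \<in> ideal_of (hc_rels n u) \<Longrightarrow> inM n u b"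
proof -
  assume b: "b \<in> ideal_of (hc_rels n u)"
  have "b = fa_add fa_zero b" by (auto simp: fa_add_def fa_zero_def)
  then show ?thesis unfolding inM_def in_HH_comm_def using b comm_span.zero by blast
qed

lemma inM_comm: "b \<in> comm_span \<Longrightarrow> inM n u b"
proof -
  assume b: "b \<in> comm_span"
  have "b = fa_add b fa_zero" by (auto simp: fa_add_def fa_zero_def)
  then show ?thesis unfolding inM_def in_HH_comm_def using b ideal_of.zero by blast
qed

definition E where "E n u P Q \<epsilon> \<longleftrightarrow> inM n u (fa_sub (mon P) (fa_smult \<epsilon> (mon Q)))"

lemma E_refl: "E n u P P 1"
proof -
  have "fa_sub (mon P) (fa_smult 1 (mon P)) = fa_zero"
    by (auto simp: fa_sub_def fa_smult_def fa_zero_def)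
  then show ?thesis unfolding E_def by (simp add: inM_comm comm_span.zero)
qed

lemma E_trans: "E n u P Q e \<Longrightarrow> E n u Q R d \<Longrightarrow> E n u P R (e * d)"
proof -
  assume a: "E n u P Q e" "E n u Q R d"
  have "inM n u (fa_add (fa_sub (mon P) (fa_smult e (mon Q))) (fa_smult e (fa_sub (mon Q) (fa_smult d (mon R)))))"
    using a unfolding E_def by (intro inM_add inM_smult)
  moreover have "fa_add (fa_sub (mon P) (fa_smult e (mon Q))) (fa_smult e (fa_sub (mon Q) (fa_smult d (mon R))))
     = fa_sub (mon P) (fa_smult (e*d) (mon R))"
    by (rule ext) (simp add: fa_add_def fa_sub_def fa_smult_def algebra_simps)
  ultimately show ?thesis unfolding E_def by simp
qed

lemma E_trans2: "E n u P Q e \<Longrightarrow> E n u Q' R d \<Longrightarrow> Q = Q' \<Longrightarrow> P' = P \<Longrightarrow> R' = R \<Longrightarrow> f = e * d \<Longrightarrow> E n u P' R' f"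
  using E_trans by blast

lemma E_cong: "E n u P Q e \<Longrightarrow> P' = P \<Longrightarrow> Q' = Q \<Longrightarrow> f = e \<Longrightarrow> E n u P' Q' f"
  by simp

lemma E_sym: "E n u P Q e \<Longrightarrow> e * e = 1 \<Longrightarrow> E n u Q P e"
proof -
  assume a: "E n u P Q e" "e * e = 1"
  have "inM n u (fa_smult (-e) (fa_sub (mon P) (fa_smult e (mon Q))))"
    using a unfolding E_def by (intro inM_smult)
  moreover have "fa_smult (-e) (fa_sub (mon P) (fa_smult e (mon Q))) = fa_sub (mon Q) (fa_smult e (mon P))"
    using a(2) by (auto simp: fa_sub_def fa_smult_def algebra_simps)
  ultimately show ?thesis unfolding E_def by simp
qed

lemma E_neg: "E n u P P (-1) \<Longrightarrow> inM n u (mon P)"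
proof -
  assume a: "E n u P P (-1)"
  have "inM n u (fa_smult (1/2) (fa_sub (mon P) (fa_smult (-1) (mon P))))"
    using a unfolding E_def by (intro inM_smult)
  moreover have "fa_smult (1/2) (fa_sub (mon P) (fa_smult (-1) (mon P))) = mon P"
    by (auto simp: fa_sub_def fa_smult_def)
  ultimately show ?thesis by simp
qed

lemma E_rot: "E n u (A @ B) (B @ A) 1"
proof -
  have "fa_sub (fa_mul (mon A) (mon B)) (fa_mul (mon B) (mon A)) \<in> comm_span"
    by (rule comm_span.comm) (rule fin_supp_mon)+
  moreover have "fa_sub (fa_mul (mon A) (mon B)) (fa_mul (mon B) (mon A)) = fa_sub (mon (A@B)) (fa_smult 1 (mon (B@A)))"
    by (simp add: mon_mul fa_smult_def)
  ultimately show ?thesis unfolding E_def by (simp add: inM_comm)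
qed

lemma E_rel_sub: "fa_sub (mon l) (mon r) \<in> hc_rels n u \<Longrightarrow> E n u (p @ l @ q) (p @ r @ q) 1"
proof -
  assume "fa_sub (mon l) (mon r) \<in> hc_rels n u"
  then have "fa_mul (mon p) (fa_mul (fa_sub (mon l) (mon r)) (mon q)) \<in> ideal_of (hc_rels n u)"
    by (rule ideal_of.gen)
  moreover have "fa_mul (mon p) (fa_mul (fa_sub (mon l) (mon r)) (mon q)) = fa_sub (mon (p@l@q)) (fa_smult 1 (mon (p@r@q)))"
    by (simp add: mul_sub_left mul_sub_right mon_mul fa_smult_def)
  ultimately show ?thesis unfolding E_def by (simp add: inM_ideal)
qed

lemma E_rel_add: "fa_add (mon l) (mon r) \<in> hc_rels n u \<Longrightarrow> E n u (p @ l @ q) (p @ r @ q) (-1)"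
proof -
  assume "fa_add (mon l) (mon r) \<in> hc_rels n u"
  then have "fa_mul (mon p) (fa_mul (fa_add (mon l) (mon r)) (mon q)) \<in> ideal_of (hc_rels n u)"
    by (rule ideal_of.gen)
  moreover have "fa_mul (mon p) (fa_mul (fa_add (mon l) (mon r)) (mon q)) = fa_sub (mon (p@l@q)) (fa_smult (-1) (mon (p@r@q)))"
    by (simp only: mul_add_left mul_add_right mon_mul) (auto simp: fa_smult_def fa_add_def fa_sub_def)
  ultimately show ?thesis unfolding E_def by (simp add: inM_ideal)
qed




context fixes n :: nat and u :: complex begin

lemma W_cc: "k \<in> {1..n} \<Longrightarrow> E n u (p @ [C k, C k] @ q) (p @ q) 1"
proof -
  assume k: "k \<in> {1..n}"
  have "fa_sub (mon [C k, C k]) (mon []) \<in> hc_rels n u" unfolding hc_rels_def apply (rule UnI1) apply (rule UnI1) apply (rule UnI1) apply (rule UnI1) apply (rule UnI1) apply (rule UnI1) apply (rule UnI1) apply (rule UnI1) apply (rule UnI1) apply (rule UnI2) using k by blast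
  from E_rel_sub[OF this, of p q] show ?thesis by simp
qed

lemma W_cswap: "k \<in> {1..n} \<Longrightarrow> j \<in> {1..n} \<Longrightarrow> k \<noteq> j \<Longrightarrow> E n u (p @ [C k, C j] @ q) (p @ [C j, C k] @ q) (-1)"
proof -
  assume k: "k \<in> {1..n}" "j \<in> {1..n}" "k \<noteq> j"
  have "fa_add (mon [C k, C j]) (mon [C j, C k]) \<in> hc_rels n u" unfolding hc_rels_def apply (rule UnI1) apply (rule UnI1) apply (rule UnI1) apply (rule UnI1) apply (rule UnI1) apply (rule UnI1) apply (rule UnI1) apply (rule UnI1) apply (rule UnI2) using k by blast
  from E_rel_add[OF this, of p q] show ?thesis by simp
qed

lemma W_cswap': "k \<in> {1..n} \<Longrightarrow> j \<in> {1..n} \<Longrightarrow> E n u (p @ [C k, C j] @ q) (p @ [C j, C k] @ q) (if k = j then 1 else -1)"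
  using W_cswap[of k j p q] E_refl[of n u] by auto

lemma tr_range: "i \<in> {1..<n} \<Longrightarrow> k \<in> {1..n} \<Longrightarrow> tr i k \<in> {1..n}"
  unfolding tr_def by auto

lemma tr_tr: "tr i (tr i k) = k"
  unfolding tr_def by auto

lemma W_sc: "i \<in> {1..<n} \<Longrightarrow> j \<in> {1..n} \<Longrightarrow> E n u (p @ [S i, C j] @ q) (p @ [C (tr i j), S i] @ q) 1"
proof -
  assume k: "i \<in> {1..<n}" "j \<in> {1..n}"
  have "fa_sub (mon [S i, C j]) (mon [C (tr i j), S i]) \<in> hc_rels n u" unfolding hc_rels_def apply (rule UnI1) apply (rule UnI1) apply (rule UnI2) using k by blast
  from E_rel_sub[OF this, of p q] show ?thesis by simp
qed

lemma W_push: "i \<in> {1..<n} \<Longrightarrow> k \<in> {1..n} \<Longrightarrow> E n u (p @ [C k, S i] @ q) (p @ [S i, C (tr i k)] @ q) 1"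
proof -
  assume a: "i \<in> {1..<n}" "k \<in> {1..n}"
  have "E n u (p @ [S i, C (tr i k)] @ q) (p @ [C (tr i (tr i k)), S i] @ q) 1"
    using a tr_range[of i k] by (intro W_sc) auto
  from E_sym[OF this] show ?thesis by (simp add: tr_tr)
qed

lemma W_ss: "i \<in> {1..<n} \<Longrightarrow> j \<in> {1..<n} \<Longrightarrow> i + 1 < j \<or> j + 1 < i \<Longrightarrow> E n u (p @ [S i, S j] @ q) (p @ [S j, S i] @ q) 1"
proof -
  assume k: "i \<in> {1..<n}" "j \<in> {1..<n}" "i + 1 < j \<or> j + 1 < i"
  have "fa_sub (mon [S i, S j]) (mon [S j, S i]) \<in> hc_rels n u" unfolding hc_rels_def apply (rule UnI1) apply (rule UnI1) apply (rule UnI1) apply (rule UnI1) apply (rule UnI1) apply (rule UnI2) using k by blast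
  from E_rel_sub[OF this, of p q] show ?thesis by simp
qed

lemma fold_tr_range: "set ss \<subseteq> {1..<n} \<Longrightarrow> k \<in> {1..n} \<Longrightarrow> fold tr ss k \<in> {1..n}"
proof (induction ss arbitrary: k)
  case Nil then show ?case by simp
next
  case (Cons a ss) then show ?case using Cons.IH[of "tr a k"] tr_range[of a k] by simp
qed

lemma push1: "set ss \<subseteq> {1..<n} \<Longrightarrow> k \<in> {1..n} \<Longrightarrow>
   E n u (p @ [C k] @ map S ss @ q) (p @ map S ss @ [C (fold tr ss k)] @ q) 1"
proof (induction ss arbitrary: p k)
  case Nil then show ?case using E_refl by simp
next
  case (Cons i ss)
  have 1: "E n u (p @ [C k, S i] @ (map S ss @ q)) (p @ [S i, C (tr i k)] @ (map S ss @ q)) 1"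
    using Cons.prems by (intro W_push) auto
  have 2: "E n u (p @ [S i] @ [C (tr i k)] @ map S ss @ q) (p @ [S i] @ map S ss @ [C (fold tr ss (tr i k))] @ q) 1"
    using Cons.IH[of "tr i k" "p @ [S i]"] Cons.prems tr_range[of i k] by simp
  show ?case by (rule E_trans2[OF 1 2]) simp_all
qed

lemma pushL: "set ss \<subseteq> {1..<n} \<Longrightarrow> set L \<subseteq> {1..n} \<Longrightarrow>
   E n u (p @ map C L @ map S ss @ q) (p @ map S ss @ map C (map (fold tr ss) L) @ q) 1"
proof (induction L arbitrary: p)
  case Nil then show ?case using E_refl by simp
next
  case (Cons x L)
  have 1: "E n u (p @ [C x] @ map C L @ map S ss @ q) (p @ [C x] @ map S ss @ map C (map (fold tr ss) L) @ q) 1"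
    using Cons.IH[of "p @ [C x]"] Cons.prems by simp
  have 2: "E n u (p @ [C x] @ map S ss @ (map C (map (fold tr ss) L) @ q)) (p @ map S ss @ [C (fold tr ss x)] @ (map C (map (fold tr ss) L) @ q)) 1"
    using Cons.prems by (intro push1) auto
  show ?case by (rule E_trans2[OF 1 2]) simp_all
qed

lemma ss1: "set ys \<subseteq> {1..<n} \<Longrightarrow> i \<in> {1..<n} \<Longrightarrow> (\<forall>j\<in>set ys. i + 1 < j \<or> j + 1 < i) \<Longrightarrow>
   E n u (p @ [S i] @ map S ys @ q) (p @ map S ys @ [S i] @ q) 1"
proof (induction ys arbitrary: p)
  case Nil then show ?case using E_refl by simp
next
  case (Cons y ys)
  have 1: "E n u (p @ [S i, S y] @ (map S ys @ q)) (p @ [S y, S i] @ (map S ys @ q)) 1"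
    using Cons.prems by (intro W_ss) auto
  have 2: "E n u (p @ [S y] @ [S i] @ map S ys @ q) (p @ [S y] @ map S ys @ [S i] @ q) 1"
    using Cons.IH[of "p @ [S y]"] Cons.prems by simp
  show ?case by (rule E_trans2[OF 1 2]) simp_all
qed

lemma ssL: "set xs \<subseteq> {1..<n} \<Longrightarrow> set ys \<subseteq> {1..<n} \<Longrightarrow> (\<forall>i\<in>set xs. \<forall>j\<in>set ys. i + 1 < j \<or> j + 1 < i) \<Longrightarrow>
   E n u (p @ map S xs @ map S ys @ q) (p @ map S ys @ map S xs @ q) 1"
proof (induction xs arbitrary: p)
  case Nil then show ?case using E_refl by simp
next
  case (Cons x xs)
  have 1: "E n u (p @ [S x] @ map S xs @ map S ys @ q) (p @ [S x] @ map S ys @ map S xs @ q) 1"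
    using Cons.IH[of "p @ [S x]"] Cons.prems by simp
  have 2: "E n u (p @ [S x] @ map S ys @ (map S xs @ q)) (p @ map S ys @ [S x] @ (map S xs @ q)) 1"
    using Cons.prems by (intro ss1) auto
  show ?case by (rule E_trans2[OF 1 2]) simp_all
qed

lemma move_front: "set (a @ x # b) \<subseteq> {1..n} \<Longrightarrow>
  \<exists>e. e * e = 1 \<and> E n u (p @ map C (a @ x # b) @ q) (p @ [C x] @ map C (a @ b) @ q) e"
proof (induction a arbitrary: p)
  case Nil then show ?case using E_refl by (intro exI[of _ 1]) simp
next
  case (Cons y a)
  obtain e where e: "e * e = 1" "E n u (p @ [C y] @ map C (a @ x # b) @ q) (p @ [C y] @ [C x] @ map C (a @ b) @ q) e"
    using Cons.IH[of "p @ [C y]"] Cons.prems by auto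
  have 2: "E n u (p @ [C y, C x] @ (map C (a @ b) @ q)) (p @ [C x, C y] @ (map C (a @ b) @ q)) (if y = x then 1 else -1)"
    using Cons.prems by (intro W_cswap') auto
  have "(e * (if y = x then 1 else -1)) * (e * (if y = x then 1 else -1)) = 1" using e(1) by (auto simp: algebra_simps)
  moreover have "E n u (p @ map C ((y # a) @ x # b) @ q) (p @ [C x] @ map C ((y # a) @ b) @ q) (e * (if y = x then 1 else -1))"
    by (rule E_trans2[OF e(2) 2]) simp_all
  ultimately show ?case by blast
qed

lemma perm_E: "mset L = mset L' \<Longrightarrow> set L \<subseteq> {1..n} \<Longrightarrow>
  \<exists>e. e * e = 1 \<and> E n u (p @ map C L @ q) (p @ map C L' @ q) e"
proof (induction L' arbitrary: L p)
  case Nil then show ?case using E_refl by (intro exI[of _ 1]) simp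
next
  case (Cons x L')
  have "x \<in> set L" using Cons.prems(1) by (metis list.set_intros(1) set_mset_mset)
  then obtain a b where L: "L = a @ x # b" by (meson split_list)
  obtain e where e: "e * e = 1" "E n u (p @ map C L @ q) (p @ [C x] @ map C (a @ b) @ q) e"
    using move_front[of a x b p q] Cons.prems L by auto
  have "mset (a @ b) = mset L'" using Cons.prems(1) L by simp
  then obtain d where d: "d * d = 1" "E n u (p @ [C x] @ map C (a @ b) @ q) (p @ [C x] @ map C L' @ q) d"
    using Cons.IH[of "a @ b" "p @ [C x]"] Cons.prems L by auto
  have "(e*d)*(e*d) = 1" using e(1) d(1) by (metis mult.assoc mult.commute mult_1_right)
  moreover have "E n u (p @ map C L @ q) (p @ map C (x # L') @ q) (e * d)"
    by (rule E_trans2[OF e(2) d(2)]) simp_all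
  ultimately show ?case by blast
qed

lemma move_exact: "set (y # a) \<subseteq> {1..n} \<Longrightarrow> y \<notin> set a \<Longrightarrow>
  E n u (p @ map C a @ [C y] @ q) (p @ [C y] @ map C a @ q) ((-1) ^ length a)"
proof (induction a arbitrary: p)
  case Nil then show ?case using E_refl by simp
next
  case (Cons z a)
  have 1: "E n u (p @ [C z] @ map C a @ [C y] @ q) (p @ [C z] @ [C y] @ map C a @ q) ((-1) ^ length a)"
    using Cons.IH[of "p @ [C z]"] Cons.prems by simp
  have 2: "E n u (p @ [C z, C y] @ (map C a @ q)) (p @ [C y, C z] @ (map C a @ q)) (-1)"
    using Cons.prems by (intro W_cswap) auto
  show ?case by (rule E_trans2[OF 1 2]) simp_all
qed

end



definition ss :: "nat list \<Rightarrow> nat \<Rightarrow> nat" where "ss \<gamma> j = sum_list (take j \<gamma>)"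
definition blk :: "nat list \<Rightarrow> nat \<Rightarrow> nat list" where "blk \<gamma> j = [ss \<gamma> j + 1..<ss \<gamma> (Suc j)]"
definition widx :: "nat list \<Rightarrow> nat list" where "widx \<gamma> = concat (map (blk \<gamma>) [0..<length \<gamma>])"

lemma w_word_eq: "w_word \<gamma> = map S (widx \<gamma>)"
  unfolding w_word_def widx_def blk_def cycle_word_def ss_def by (simp add: map_concat comp_def)

lemma block_eq: "block \<gamma> j = {ss \<gamma> j + 1..ss \<gamma> (Suc j)}"
  unfolding block_def ss_def by simp

lemma ss_mono: "j \<le> j' \<Longrightarrow> ss \<gamma> j \<le> ss \<gamma> j'"
proof -
  assume "j \<le> j'"
  then have "take j' \<gamma> = take j \<gamma> @ drop j (take j' \<gamma>)"
    by (metis append_take_drop_id min.absorb1 take_take)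
  then have "sum_list (take j' \<gamma>) = sum_list (take j \<gamma>) + sum_list (drop j (take j' \<gamma>))"
    by (metis sum_list_append)
  then show ?thesis unfolding ss_def by simp
qed

lemma ss_Suc: "j < length \<gamma> \<Longrightarrow> ss \<gamma> (Suc j) = ss \<gamma> j + \<gamma> ! j"
  unfolding ss_def by (simp add: take_Suc_conv_app_nth)

lemma ss_le: "ss \<gamma> j \<le> sum_list \<gamma>"
  unfolding ss_def by (metis append_take_drop_id le_add1 sum_list_append)

lemma ss_len: "ss \<gamma> (length \<gamma>) = sum_list \<gamma>"
  unfolding ss_def by simp

lemma ss_0: "ss \<gamma> 0 = 0" unfolding ss_def by simp

lemma fold_fix: "(\<forall>i\<in>set xs. k \<noteq> i \<and> k \<noteq> i + 1) \<Longrightarrow> fold tr xs k = k"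
  by (induction xs) (auto simp: tr_def)

lemma cyc_fold: "a \<le> b \<Longrightarrow> fold tr [a..<b] k = (if k = a then b else if a < k \<and> k \<le> b then k - 1 else k)"
proof (induction b)
  case 0 then show ?case by simp
next
  case (Suc b)
  show ?case
  proof (cases "a = Suc b")
    case True then show ?thesis by simp
  next
    case False
    then have ab: "a \<le> b" using Suc.prems by simp
    then show ?thesis using Suc.IH[OF ab] by (auto simp: tr_def)
  qed
qed

context fixes \<gamma> :: "nat list" assumes pos: "\<forall>g\<in>set \<gamma>. 0 < g"
begin

lemma ss_lt: "j < length \<gamma> \<Longrightarrow> ss \<gamma> j < ss \<gamma> (Suc j)"
  using ss_Suc[of j \<gamma>] pos nth_mem[of j \<gamma>] by auto

lemma block_ex: "k \<in> {1..sum_list \<gamma>} \<Longrightarrow> \<exists>j<length \<gamma>. k \<in> block \<gamma> j"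
proof -
  assume k: "k \<in> {1..sum_list \<gamma>}"
  define A where "A = {j. j \<le> length \<gamma> \<and> ss \<gamma> j < k}"
  have fin: "finite A" unfolding A_def by simp
  have "0 \<in> A" using k unfolding A_def by (simp add: ss_0)
  define j where "j = Max A"
  have jA: "j \<in> A" using Max_in[OF fin] \<open>0 \<in> A\<close> unfolding j_def by blast
  have jl: "j < length \<gamma>"
  proof (rule ccontr)
    assume "\<not> j < length \<gamma>"
    then have "j = length \<gamma>" using jA unfolding A_def by simp
    then show False using jA k ss_len[of \<gamma>] unfolding A_def by simp
  qed
  have "Suc j \<notin> A" using fin unfolding j_def by (meson Max_ge Suc_n_not_le_n)
  then have "k \<le> ss \<gamma> (Suc j)" using jl unfolding A_def by simp
  then show ?thesis using jl jA unfolding A_def block_eq by auto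
qed

lemma block_uniq: "j < length \<gamma> \<Longrightarrow> j' < length \<gamma> \<Longrightarrow> k \<in> block \<gamma> j \<Longrightarrow> k \<in> block \<gamma> j' \<Longrightarrow> j = j'"
proof (rule ccontr)
  assume a: "j < length \<gamma>" "j' < length \<gamma>" "k \<in> block \<gamma> j" "k \<in> block \<gamma> j'" "j \<noteq> j'"
  show False
  proof (cases "j < j'")
    case True
    then have "ss \<gamma> (Suc j) \<le> ss \<gamma> j'" by (intro ss_mono) simp
    then show False using a unfolding block_eq by auto
  next
    case False
    then have "ss \<gamma> (Suc j') \<le> ss \<gamma> j" using a by (intro ss_mono) simp
    then show False using a unfolding block_eq by auto
  qed
qed

lemma widx_split: "j < length \<gamma> \<Longrightarrow> widx \<gamma> = concat (map (blk \<gamma>) [0..<j]) @ blk \<gamma> j @ concat (map (blk \<gamma>) [Suc j..<length \<gamma>])"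
proof -
  assume j: "j < length \<gamma>"
  have "[0..<length \<gamma>] = [0..<j] @ [j..<length \<gamma>]" using upt_add_eq_append[of 0 j "length \<gamma> - j"] j by simp
  moreover have "[j..<length \<gamma>] = j # [Suc j..<length \<gamma>]" using j by (simp add: upt_conv_Cons)
  ultimately show ?thesis unfolding widx_def by simp
qed

lemma P_bound: "i \<in> set (concat (map (blk \<gamma>) [0..<j])) \<Longrightarrow> i + 1 \<le> ss \<gamma> j"
proof -
  assume "i \<in> set (concat (map (blk \<gamma>) [0..<j]))"
  then obtain j' where "j' < j" "i \<in> set (blk \<gamma> j')" by auto
  moreover have "ss \<gamma> (Suc j') \<le> ss \<gamma> j" using \<open>j' < j\<close> by (intro ss_mono) simp
  ultimately show ?thesis unfolding blk_def by auto
qed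

lemma Q_bound: "i \<in> set (concat (map (blk \<gamma>) [Suc j..<length \<gamma>])) \<Longrightarrow> ss \<gamma> (Suc j) + 1 \<le> i"
proof -
  assume "i \<in> set (concat (map (blk \<gamma>) [Suc j..<length \<gamma>]))"
  then obtain j' where "Suc j \<le> j'" "i \<in> set (blk \<gamma> j')" by auto
  moreover have "ss \<gamma> (Suc j) \<le> ss \<gamma> j'" using \<open>Suc j \<le> j'\<close> by (intro ss_mono) simp
  ultimately show ?thesis unfolding blk_def by auto
qed

lemma widx_range: "set (widx \<gamma>) \<subseteq> {1..<sum_list \<gamma>}"
proof
  fix i assume "i \<in> set (widx \<gamma>)"
  then obtain j where j: "j < length \<gamma>" "i \<in> set (blk \<gamma> j)" unfolding widx_def by auto
  then show "i \<in> {1..<sum_list \<gamma>}" using ss_le[of \<gamma> "Suc j"] unfolding blk_def by auto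
qed

lemma sigma_block: "j < length \<gamma> \<Longrightarrow> k \<in> block \<gamma> j \<Longrightarrow>
  fold tr (widx \<gamma>) k = (if k = ss \<gamma> j + 1 then ss \<gamma> (Suc j) else k - 1)"
proof -
  assume j: "j < length \<gamma>" and k: "k \<in> block \<gamma> j"
  let ?P = "concat (map (blk \<gamma>) [0..<j])" and ?Q = "concat (map (blk \<gamma>) [Suc j..<length \<gamma>])"
  have 1: "fold tr ?P k = k" using k P_bound[of _ j] unfolding block_eq
    by (intro fold_fix) (metis Suc_eq_plus1 atLeastAtMost_iff not_less_eq_eq le_antisym nat_le_linear add_le_cancel_right le_trans)
  define v where "v = fold tr (blk \<gamma> j) k"
  have vv: "v = (if k = ss \<gamma> j + 1 then ss \<gamma> (Suc j) else k - 1)"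
    unfolding v_def blk_def using cyc_fold[of "ss \<gamma> j + 1" "ss \<gamma> (Suc j)" k] ss_lt[OF j] k unfolding block_eq by auto
  have vr: "v \<le> ss \<gamma> (Suc j)" using vv k unfolding block_eq by auto
  have 2: "fold tr ?Q v = v" using vr Q_bound[of _ j] by (intro fold_fix) fastforce
  show ?thesis using widx_split[OF j] 1 2 vv unfolding v_def by simp
qed

end

context fixes n :: nat and u :: complex and \<gamma> :: "nat list"
  assumes pos: "\<forall>g\<in>set \<gamma>. 0 < g" and sumn: "sum_list \<gamma> = n"
begin

lemma amove: "set L \<subseteq> {1..n} \<Longrightarrow> k \<in> {1..n} \<Longrightarrow>
  E n u (w_word \<gamma> @ map C (L @ [k])) (w_word \<gamma> @ map C (fold tr (widx \<gamma>) k # L)) 1"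
proof -
  assume L: "set L \<subseteq> {1..n}" and k: "k \<in> {1..n}"
  have 1: "E n u ((w_word \<gamma> @ map C L) @ [C k]) ([C k] @ (w_word \<gamma> @ map C L)) 1" by (rule E_rot)
  have 2: "E n u ([] @ [C k] @ map S (widx \<gamma>) @ map C L) ([] @ map S (widx \<gamma>) @ [C (fold tr (widx \<gamma>) k)] @ map C L) 1"
    using widx_range[OF pos] sumn k by (intro push1) auto
  show ?thesis by (rule E_trans2[OF 1 2]) (simp_all add: w_word_eq)
qed

lemma bconj: "j < length \<gamma> \<Longrightarrow> set L \<subseteq> {1..n} \<Longrightarrow>
  E n u (w_word \<gamma> @ map C L) (w_word \<gamma> @ map C (map (fold tr (blk \<gamma> j)) L)) 1"
proof -
  assume j: "j < length \<gamma>" and L: "set L \<subseteq> {1..n}"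
  define P where "P = concat (map (blk \<gamma>) [0..<j])"
  define Q where "Q = concat (map (blk \<gamma>) [Suc j..<length \<gamma>])"
  define B where "B = blk \<gamma> j"
  have W: "widx \<gamma> = P @ B @ Q" unfolding P_def Q_def B_def by (rule widx_split[OF pos j])
  have rng: "set P \<subseteq> {1..<n}" "set B \<subseteq> {1..<n}" "set Q \<subseteq> {1..<n}"
    using widx_range[OF pos] sumn unfolding W by auto
  have sepPB: "\<forall>i\<in>set P. \<forall>i'\<in>set B. i + 1 < i' \<or> i' + 1 < i"
    using P_bound[OF pos, of _ j] unfolding P_def B_def blk_def by fastforce
  have sepBQ: "\<forall>i\<in>set B. \<forall>i'\<in>set Q. i + 1 < i' \<or> i' + 1 < i"
    using Q_bound[OF pos, of _ j] unfolding Q_def B_def blk_def by fastforce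
  have sepBP: "\<forall>i\<in>set B. \<forall>i'\<in>set P. i + 1 < i' \<or> i' + 1 < i" using sepPB by fastforce
  let ?L' = "map (fold tr B) L"
  have 1: "E n u ([] @ map S P @ map S B @ (map S Q @ map C L)) ([] @ map S B @ map S P @ (map S Q @ map C L)) 1"
    using rng sepPB by (intro ssL) auto
  have 2: "E n u (map S B @ (map S P @ map S Q @ map C L)) ((map S P @ map S Q @ map C L) @ map S B) 1"
    by (rule E_rot)
  have 3: "E n u ((map S P @ map S Q) @ map C L @ map S B @ []) ((map S P @ map S Q) @ map S B @ map C ?L' @ []) 1"
    using rng L by (intro pushL) auto
  have 4: "E n u (map S P @ map S Q @ map S B @ map C ?L') (map S P @ map S B @ map S Q @ map C ?L') 1"
  proof -
    have "E n u (map S P @ map S B @ map S Q @ map C ?L') (map S P @ map S Q @ map S B @ map C ?L') 1"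
      using rng sepBQ by (intro ssL) auto
    from E_sym[OF this] show ?thesis by simp
  qed
  have 12: "E n u (map S P @ map S B @ map S Q @ map C L) (map S P @ map S Q @ map C L @ map S B) 1"
    by (rule E_trans2[OF 1 2]) simp_all
  have 34: "E n u (map S P @ map S Q @ map C L @ map S B) (map S P @ map S B @ map S Q @ map C ?L') 1"
    by (rule E_trans2[OF 3 4]) simp_all
  show ?thesis by (rule E_trans2[OF 12 34]) (simp_all add: w_word_eq W B_def)
qed

end



lemma mset_sum_eq: "mset A = mset B \<Longrightarrow> sum_list A = (sum_list B :: nat)"
  by (metis sum_mset_sum_list)

lemma mset_len_filter: "mset A = mset B \<Longrightarrow> length (filter P A) = length (filter P B)"
  by (metis mset_filter size_mset)

lemma mset_rem: "k \<in> set L \<Longrightarrow> mset L = mset (k # remove1 k L)"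
  by simp

lemma E_inM: "E n u P Q e \<Longrightarrow> inM n u (mon Q) \<Longrightarrow> inM n u (mon P)"
proof -
  assume a: "E n u P Q e" "inM n u (mon Q)"
  have "inM n u (fa_add (fa_sub (mon P) (fa_smult e (mon Q))) (fa_smult e (mon Q)))"
    using a unfolding E_def by (intro inM_add inM_smult)
  moreover have "fa_add (fa_sub (mon P) (fa_smult e (mon Q))) (fa_smult e (mon Q)) = mon P"
    by (auto simp: fa_add_def fa_sub_def fa_smult_def)
  ultimately show ?thesis by simp
qed

lemma sq1: "(e::complex) * e = 1 \<Longrightarrow> d * d = 1 \<Longrightarrow> (e * d) * (e * d) = 1"
  by (metis mult.assoc mult.commute mult_1_right)

context fixes n :: nat and u :: complex and \<gamma> :: "nat list"
  assumes pos: "\<forall>g\<in>set \<gamma>. 0 < g" and sumn: "sum_list \<gamma> = n"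
begin

definition cnt where "cnt L j = length (filter (\<lambda>x. x \<in> block \<gamma> j) L)"

lemma repl: "k \<in> set L \<Longrightarrow> set L \<subseteq> {1..n} \<Longrightarrow>
  \<exists>e. e * e = 1 \<and> E n u (w_word \<gamma> @ map C L) (w_word \<gamma> @ map C (fold tr (widx \<gamma>) k # remove1 k L)) e"
proof -
  assume k: "k \<in> set L" and L: "set L \<subseteq> {1..n}"
  have "mset L = mset (remove1 k L @ [k])" using k by simp
  then obtain e where e: "e * e = 1" "E n u (w_word \<gamma> @ map C L @ []) (w_word \<gamma> @ map C (remove1 k L @ [k]) @ []) e"
    using perm_E[of L "remove1 k L @ [k]" n u "w_word \<gamma>" "[]"] L by blast
  have 2: "E n u (w_word \<gamma> @ map C (remove1 k L @ [k])) (w_word \<gamma> @ map C (fold tr (widx \<gamma>) k # remove1 k L)) 1"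
    using L k by (intro amove[OF pos sumn]) (use set_remove1_subset[of k L] in auto)
  have "E n u (w_word \<gamma> @ map C L) (w_word \<gamma> @ map C (fold tr (widx \<gamma>) k # remove1 k L)) (e * 1)"
    by (rule E_trans2[OF e(2) 2]) simp_all
  then show ?thesis using e(1) by auto
qed

lemma rempair: "L = a @ [x] @ b @ [x] @ c \<Longrightarrow> set L \<subseteq> {1..n} \<Longrightarrow>
  \<exists>e. e * e = 1 \<and> E n u (w_word \<gamma> @ map C L) (w_word \<gamma> @ map C (a @ b @ c)) e"
proof -
  assume Ld: "L = a @ [x] @ b @ [x] @ c" and L: "set L \<subseteq> {1..n}"
  have "mset L = mset ([x, x] @ a @ b @ c)" using Ld by simp
  then obtain e where e: "e * e = 1" "E n u (w_word \<gamma> @ map C L @ []) (w_word \<gamma> @ map C ([x, x] @ a @ b @ c) @ []) e"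
    using perm_E[of L "[x, x] @ a @ b @ c" n u "w_word \<gamma>" "[]"] L by blast
  have 2: "E n u (w_word \<gamma> @ [C x, C x] @ map C (a @ b @ c)) (w_word \<gamma> @ map C (a @ b @ c)) 1"
    using L Ld by (intro W_cc) auto
  have "E n u (w_word \<gamma> @ map C L) (w_word \<gamma> @ map C (a @ b @ c)) (e * 1)"
    by (rule E_trans2[OF e(2) 2]) simp_all
  then show ?thesis using e(1) by auto
qed

lemma cnt_rempair: "L = a @ [x] @ b @ [x] @ c \<Longrightarrow> even (cnt L j) = even (cnt (a @ b @ c) j)"
  unfolding cnt_def by auto

lemma sum_rempair: "L = a @ [x] @ b @ [x] @ c \<Longrightarrow> set L \<subseteq> {1..n} \<Longrightarrow> sum_list (a @ b @ c) < sum_list L"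
  by auto

lemma down_facts:
  assumes L: "set L \<subseteq> {1..n}" and k: "k \<in> set L" and j: "j < length \<gamma>" and kb: "k \<in> block \<gamma> j"
    and ka: "k \<noteq> ss \<gamma> j + 1"
  shows "fold tr (widx \<gamma>) k = k - 1" "set ((k - 1) # remove1 k L) \<subseteq> {1..n}"
    "sum_list ((k - 1) # remove1 k L) < sum_list L"
    "\<And>j'. j' < length \<gamma> \<Longrightarrow> cnt ((k - 1) # remove1 k L) j' = cnt L j'"
    "length ((k - 1) # remove1 k L) = length L"
proof -
  show "fold tr (widx \<gamma>) k = k - 1" using sigma_block[OF pos j kb] ka by simp
  have k1: "k - 1 \<in> block \<gamma> j" "1 \<le> k - 1" using kb ka unfolding block_eq by auto
  show "set ((k - 1) # remove1 k L) \<subseteq> {1..n}" using L k k1(2) set_remove1_subset[of k L] by fastforce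
  have "sum_list L = sum_list (k # remove1 k L)" by (rule mset_sum_eq[OF mset_rem[OF k]])
  then show "sum_list ((k - 1) # remove1 k L) < sum_list L" using k1 by simp
  fix j' assume j': "j' < length \<gamma>"
  have eq: "(k \<in> block \<gamma> j') = (k - 1 \<in> block \<gamma> j')"
    using block_uniq[OF pos j j'] j j' kb k1 by blast
  have "cnt L j' = cnt (k # remove1 k L) j'" unfolding cnt_def by (rule mset_len_filter[OF mset_rem[OF k]])
  then show "cnt ((k - 1) # remove1 k L) j' = cnt L j'" using eq unfolding cnt_def by simp
next
  show "length ((k - 1) # remove1 k L) = length L" using k by (simp add: length_remove1) (metis One_nat_def Suc_pred length_pos_if_in_set)
qed

lemma even_main: "set L \<subseteq> {1..n} \<Longrightarrow> (\<forall>j<length \<gamma>. even (cnt L j)) \<Longrightarrow>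
  \<exists>e. e * e = 1 \<and> E n u (w_word \<gamma> @ map C L) (w_word \<gamma>) e"
proof (induction "sum_list L" arbitrary: L rule: less_induct)
  case less
  show ?case
  proof (cases "distinct L")
    case False
    then obtain a x b c where Ld: "L = a @ [x] @ b @ [x] @ c" using not_distinct_decomp by blast
    obtain e where e: "e * e = 1" "E n u (w_word \<gamma> @ map C L) (w_word \<gamma> @ map C (a @ b @ c)) e"
      using rempair[OF Ld less.prems(1)] by blast
    obtain d where d: "d * d = 1" "E n u (w_word \<gamma> @ map C (a @ b @ c)) (w_word \<gamma>) d"
      using less.hyps[OF sum_rempair[OF Ld less.prems(1)]] less.prems cnt_rempair[OF Ld] Ld by auto
    show ?thesis using E_trans[OF e(2) d(2)] sq1[OF e(1) d(1)] by blast
  next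
    case dist: True
    show ?thesis
    proof (cases "L = []")
      case True then show ?thesis using E_refl by (intro exI[of _ 1]) simp
    next
      case False
      define k where "k = Max (set L)"
      have kL: "k \<in> set L" unfolding k_def using False by simp
      have kmax: "\<And>i. i \<in> set L \<Longrightarrow> i \<le> k" unfolding k_def by simp
      have "k \<in> {1..sum_list \<gamma>}" using less.prems(1) kL sumn by auto
      then obtain j where j: "j < length \<gamma>" "k \<in> block \<gamma> j"
        using block_ex[OF pos, of k] by auto
      have cardeq: "cnt L j = card ({x. x \<in> block \<gamma> j} \<inter> set L)"
        unfolding cnt_def by (rule distinct_length_filter[OF dist])
      have kin: "k \<in> {x. x \<in> block \<gamma> j} \<inter> set L" using j kL by simp
      have ev: "even (card ({x. x \<in> block \<gamma> j} \<inter> set L))" using less.prems(2) j(1) cardeq by metis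
      have "\<not> {x. x \<in> block \<gamma> j} \<inter> set L \<subseteq> {k}"
      proof
        assume "{x. x \<in> block \<gamma> j} \<inter> set L \<subseteq> {k}"
        then have "{x. x \<in> block \<gamma> j} \<inter> set L = {k}" using kin by blast
        then show False using ev by simp
      qed
      then obtain i where i: "i \<in> set L" "i \<in> block \<gamma> j" "i \<noteq> k" by auto
      have ik: "i < k" using kmax[OF i(1)] i(3) by simp
      have ka: "k \<noteq> ss \<gamma> j + 1" using i(2) ik unfolding block_eq by auto
      note df = down_facts[OF less.prems(1) kL j(1) j(2) ka]
      obtain e where e: "e * e = 1" "E n u (w_word \<gamma> @ map C L) (w_word \<gamma> @ map C ((k - 1) # remove1 k L)) e"
        using repl[OF kL less.prems(1)] df(1) by auto
      obtain d where d: "d * d = 1" "E n u (w_word \<gamma> @ map C ((k - 1) # remove1 k L)) (w_word \<gamma>) d"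
        using less.hyps[OF df(3) df(2)] df(4) less.prems(2) by auto
      show ?thesis using E_trans[OF e(2) d(2)] sq1[OF e(1) d(1)] by blast
    qed
  qed
qed

end



context fixes n :: nat and u :: complex and \<gamma> :: "nat list"
  assumes pos: "\<forall>g\<in>set \<gamma>. 0 < g" and sumn: "sum_list \<gamma> = n"
begin

lemma base_case:
  assumes L: "set L \<subseteq> {1..n}" and dist: "distinct L" and ev: "even (length L)"
    and firsts: "\<forall>k\<in>set L. \<forall>j<length \<gamma>. k \<in> block \<gamma> j \<longrightarrow> k = ss \<gamma> j + 1"
    and j0: "j0 < length \<gamma>" and odd: "odd (cnt \<gamma> L j0)"
  shows "inM n u (mon (w_word \<gamma> @ map C L))"
proof -
  let ?a = "ss \<gamma> j0 + 1" and ?b = "ss \<gamma> (Suc j0)" and ?W = "w_word \<gamma>"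
  have "cnt \<gamma> L j0 \<noteq> 0" using odd by presburger
  then obtain y where y: "y \<in> set L" "y \<in> block \<gamma> j0" by (auto simp: cnt_def[OF pos sumn] filter_empty_conv)
  have ya: "y = ?a" using firsts y j0 by blast
  have ab: "?a \<le> ?b" using ss_lt[OF pos j0] by simp
  define L1 where "L1 = remove1 ?a L"
  have aL1: "?a \<notin> set L1" unfolding L1_def using dist by simp
  have L1sub: "set L1 \<subseteq> set L" unfolding L1_def by (rule set_remove1_subset)
  have L1out: "\<And>x. x \<in> set L1 \<Longrightarrow> \<not> (?a \<le> x \<and> x \<le> ?b)"
  proof
    fix x assume x: "x \<in> set L1" "?a \<le> x \<and> x \<le> ?b"
    then have "x \<in> block \<gamma> j0" unfolding block_eq by simp
    then have "x = ?a" using firsts L1sub x(1) j0 by blast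
    then show False using x aL1 by simp
  qed
  have ll1: "length L1 = length L - 1" unfolding L1_def using y ya by (simp add: length_remove1)
  have ll0: "length L > 0" using y(1) by (cases L) auto
  have len1: "odd (length L1)" using ll1 ll0 ev by presburger
  have rng: "set (L1 @ [?a]) \<subseteq> {1..n}" using L L1sub y ya by auto
  have brng: "?b \<in> {1..n}" using ss_le[of \<gamma> "Suc j0"] sumn ab by simp
  have "mset L = mset (L1 @ [?a])" unfolding L1_def using y ya by simp
  then obtain e1 where e1: "e1 * e1 = 1" "E n u (?W @ map C L @ []) (?W @ map C (L1 @ [?a]) @ []) e1"
    using perm_E[of L "L1 @ [?a]" n u ?W "[]"] L by blast
  have sa: "fold tr (widx \<gamma>) ?a = ?b" using sigma_block[OF pos j0, of ?a] ab unfolding block_eq by simp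
  have A: "E n u (?W @ map C (L1 @ [?a])) (?W @ map C (?b # L1)) 1"
    using amove[OF pos sumn, of L1 ?a u] rng sa by simp
  have bL1: "?b \<notin> set L1" using L1out ab by blast
  have B0: "E n u (?W @ map C L1 @ [C ?b] @ []) (?W @ [C ?b] @ map C L1 @ []) ((-1) ^ length L1)"
    using rng brng bL1 by (intro move_exact) auto
  have B: "E n u (?W @ map C (?b # L1)) (?W @ map C (L1 @ [?b])) (-1)"
    using E_sym[OF B0] len1 by simp
  have AB: "E n u (?W @ map C (L1 @ [?a])) (?W @ map C (L1 @ [?b])) (-1)"
    using E_trans[OF A B] by simp
  have fx: "map (fold tr (blk \<gamma> j0)) (L1 @ [?a]) = L1 @ [?b]"
  proof -
    have fe: "\<And>x. fold tr (blk \<gamma> j0) x = (if x = ?a then ?b else if ?a < x \<and> x \<le> ?b then x - 1 else x)"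
      unfolding blk_def using cyc_fold[OF ab] by simp
    have "\<And>x. x \<in> set L1 \<Longrightarrow> fold tr (blk \<gamma> j0) x = x"
    proof -
      fix x assume "x \<in> set L1"
      then have "\<not> (?a \<le> x \<and> x \<le> ?b)" by (rule L1out)
      then show "fold tr (blk \<gamma> j0) x = x" using fe[of x] ab by auto
    qed
    then have "map (fold tr (blk \<gamma> j0)) L1 = L1" by (rule map_idI)
    then show ?thesis using fe[of ?a] by simp
  qed
  have Cc: "E n u (?W @ map C (L1 @ [?a])) (?W @ map C (L1 @ [?b])) 1"
  proof -
    have "E n u (?W @ map C (L1 @ [?a])) (?W @ map C (map (fold tr (blk \<gamma> j0)) (L1 @ [?a]))) 1"
      by (rule bconj[OF pos sumn j0 rng])
    then show ?thesis unfolding fx .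
  qed
  have X1: "E n u (?W @ map C (L1 @ [?a])) (?W @ map C (L1 @ [?a])) (-1)"
    using E_trans[OF AB E_sym[OF Cc]] by simp
  have e1': "E n u (?W @ map C L) (?W @ map C (L1 @ [?a])) e1" using e1(2) by simp
  have "E n u (?W @ map C L) (?W @ map C L) (e1 * (-1) * e1)"
    by (rule E_trans[OF E_trans[OF e1' X1] E_sym[OF e1' e1(1)]])
  then have "E n u (?W @ map C L) (?W @ map C L) (-1)" using e1(1) by (simp add: algebra_simps)
  then show ?thesis by (rule E_neg)
qed

lemma odd_main: "set L \<subseteq> {1..n} \<Longrightarrow> even (length L) \<Longrightarrow> j0 < length \<gamma> \<Longrightarrow> odd (cnt \<gamma> L j0) \<Longrightarrow>
  inM n u (mon (w_word \<gamma> @ map C L))"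
proof (induction "sum_list L" arbitrary: L rule: less_induct)
  case less
  show ?case
  proof (cases "distinct L")
    case False
    then obtain a x b c where Ld: "L = a @ [x] @ b @ [x] @ c" using not_distinct_decomp by blast
    obtain e where e: "e * e = 1" "E n u (w_word \<gamma> @ map C L) (w_word \<gamma> @ map C (a @ b @ c)) e"
      using rempair[OF pos sumn Ld less.prems(1)] by blast
    have "inM n u (mon (w_word \<gamma> @ map C (a @ b @ c)))"
      using less.hyps[OF sum_rempair[OF pos sumn Ld less.prems(1)]] less.prems cnt_rempair[OF pos sumn Ld, of j0] Ld by auto
    then show ?thesis using E_inM[OF e(2)] by blast
  next
    case dist: True
    show ?thesis
    proof (cases "\<exists>k\<in>set L. \<exists>j<length \<gamma>. k \<in> block \<gamma> j \<and> k \<noteq> ss \<gamma> j + 1")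
      case True
      then obtain k j where kj: "k \<in> set L" "j < length \<gamma>" "k \<in> block \<gamma> j" "k \<noteq> ss \<gamma> j + 1" by blast
      note df = down_facts[OF pos sumn less.prems(1) kj]
      obtain e where e: "e * e = 1" "E n u (w_word \<gamma> @ map C L) (w_word \<gamma> @ map C ((k - 1) # remove1 k L)) e"
        using repl[OF pos sumn kj(1) less.prems(1)] df(1) by auto
      have "inM n u (mon (w_word \<gamma> @ map C ((k - 1) # remove1 k L)))"
        apply (rule less.hyps[OF df(3) df(2)])
        using df(4)[OF less.prems(3)] df(5) less.prems by simp_all
      then show ?thesis using E_inM[OF e(2)] by blast
    next
      case False
      then show ?thesis using base_case[OF less.prems(1) dist less.prems(2) _ less.prems(3,4)] by blast
    qed
  qed
qed

end

theorem proposition3p1p4: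
  fixes n :: nat and u :: complex and \<gamma> :: "nat list" and I :: "nat set"
  assumes "\<forall>g\<in>set \<gamma>. 0 < g"
    and "sum_list \<gamma> = n"
    and "I \<subseteq> {1..n}"
    and "even (card I)"
  shows "(if (\<forall>j<length \<gamma>. even (card (I \<inter> block \<gamma> j)))
          then (\<exists>\<epsilon>\<in>{1, -1::complex}.
                  in_HH_comm n u (fa_sub (mon (w_word \<gamma> @ c_word I)) (fa_smult \<epsilon> (mon (w_word \<gamma>)))))
          else in_HH_comm n u (mon (w_word \<gamma> @ c_word I)))"
proof -
  define L where "L = sorted_list_of_set I"
  have fin: "finite I" using assms(3) finite_subset[of I "{1..n}"] by simp
  have setL: "set L = I" unfolding L_def using fin by simp
  have dist: "distinct L" unfolding L_def by simp
  have cw: "c_word I = map C L" unfolding c_word_def L_def by simp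
  have Lr: "set L \<subseteq> {1..n}" using setL assms(3) by simp
  have lenL: "length L = card I" unfolding L_def using fin by simp
  have cnteq: "\<And>j. cnt \<gamma> L j = card (I \<inter> block \<gamma> j)"
  proof -
    fix j
    have "cnt \<gamma> L j = card ({x. x \<in> block \<gamma> j} \<inter> set L)"
      unfolding cnt_def[OF assms(1,2)] by (rule distinct_length_filter[OF dist])
    moreover have "{x. x \<in> block \<gamma> j} \<inter> set L = I \<inter> block \<gamma> j" using setL by blast
    ultimately show "cnt \<gamma> L j = card (I \<inter> block \<gamma> j)" by simp
  qed
  show ?thesis
  proof (cases "\<forall>j<length \<gamma>. even (card (I \<inter> block \<gamma> j))")
    case True
    have ev: "\<forall>j<length \<gamma>. even (cnt \<gamma> L j)" using True cnteq by simp
    have ex: "\<exists>e. e * e = 1 \<and> E n u (w_word \<gamma> @ map C L) (w_word \<gamma>) e"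
      by (rule even_main[OF assms(1,2) Lr ev])
    then obtain e where e: "e * e = 1" "E n u (w_word \<gamma> @ map C L) (w_word \<gamma>) e" by blast
    have "(e - 1) * (e + 1) = 0" using e(1) by (simp add: algebra_simps)
    then have "e - 1 = 0 \<or> e + 1 = 0" by simp
    then have "e = 1 \<or> e = -1" by (metis eq_neg_iff_add_eq_0 right_minus_eq)
    then have eset: "e \<in> {1, -1}" by blast
    have hh: "in_HH_comm n u (fa_sub (mon (w_word \<gamma> @ c_word I)) (fa_smult e (mon (w_word \<gamma>))))"
      using e(2) unfolding E_def inM_def cw .
    have "\<exists>\<epsilon>\<in>{1, -1::complex}. in_HH_comm n u (fa_sub (mon (w_word \<gamma> @ c_word I)) (fa_smult \<epsilon> (mon (w_word \<gamma>))))"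
      using eset hh by blast
    then show ?thesis by (subst if_P[OF True])
  next
    case False
    then obtain j0 where j0: "j0 < length \<gamma>" "odd (card (I \<inter> block \<gamma> j0))" by auto
    have evl: "even (length L)" using lenL assms(4) by simp
    have oc: "odd (cnt \<gamma> L j0)" using cnteq j0(2) by simp
    have "inM n u (mon (w_word \<gamma> @ map C L))"
      by (rule odd_main[OF assms(1,2) Lr evl j0(1) oc])
    then have "in_HH_comm n u (mon (w_word \<gamma> @ c_word I))" unfolding inM_def cw .
    then show ?thesis by (subst if_not_P[OF False])
  qed
qed


end
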